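(* Let $H:\mathbb{R}^d\times\mathbb{R}^d\to\mathbb{R}$ be $C^1$, $\alpha_H$-strongly convex in $p$ uniformly in $x$, and set $F=D_pH$, $G=-D_xH$, assumed continuous. If for all $x,y,p,q\in\mathbb{R}^d$, $(F(x,p)-F(y,q))\cdot(p-q)+(G(x,p)-G(y,q))\cdot(x-y)\ge0$, then for all $x,y,p,q\in\mathbb{R}^d$, $(F(x,p)-F(y,q))\cdot(p-q)+(G(x,p)-G(y,q))\cdot(x-y)\ge\alpha_H|p-q|^2$.
   Context: $\alpha_H$-strong convexity in $p$ uniformly in $x$: for every $x$, $p\mapsto H(x,p)-\frac{\alpha_H}2|p|^2$ is convex, with $\alpha_H>0$. *)

theory Defs
  imports "HOL-Analysis.Analysis"
begin

end

theory Submission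
  imports Defs
begin

lemma conv_tangent:
  fixes g :: "'a::real_normed_vector \<Rightarrow> real"
  assumes cv: "convex_on UNIV g" and d: "(g has_derivative g') (at p)"
  shows "g q \<ge> g p + g' (q - p)"
proof -
  define v where "v = q - p"
  define \<phi> where "\<phi> t = g (p + t *\<^sub>R v)" for t :: real
  have lin: "linear g'" using d has_derivative_linear by blast
  have "((\<lambda>t::real. p + t *\<^sub>R v) has_derivative (\<lambda>t. t *\<^sub>R v)) (at 0)"
    by (auto intro!: derivative_eq_intros)
  from has_derivative_compose[OF this] d
  have "(\<phi> has_derivative (\<lambda>t. g' (t *\<^sub>R v))) (at 0)"
    unfolding \<phi>_def by simp
  moreover have "(\<lambda>t. g' (t *\<^sub>R v)) = (\<lambda>t. g' v * t)"
    using lin by (auto simp: linear_scale)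
  moreover have "(\<lambda>t. g' v * t) = (*) (g' v)" by auto
  ultimately have D: "(\<phi> has_field_derivative g' v) (at 0)"
    by (simp add: has_field_derivative_def)
  have cphi: "convex_on UNIV \<phi>"
  proof (rule convex_onI)
    fix t x y :: real assume t: "0 < t" "t < 1"
    have "\<phi> ((1 - t) *\<^sub>R x + t *\<^sub>R y) = g ((1 - t) *\<^sub>R (p + x *\<^sub>R v) + t *\<^sub>R (p + y *\<^sub>R v))"
      unfolding \<phi>_def by (simp add: algebra_simps)
    also have "\<dots> \<le> (1 - t) * g (p + x *\<^sub>R v) + t * g (p + y *\<^sub>R v)"
      using cv t by (intro convex_onD) auto
    finally show "\<phi> ((1 - t) *\<^sub>R x + t *\<^sub>R y) \<le> (1 - t) * \<phi> x + t * \<phi> y"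
      unfolding \<phi>_def by simp
  qed auto
  have "\<phi> 1 - \<phi> 0 \<ge> g' v * (1 - 0)"
    by (rule convex_on_imp_above_tangent[OF cphi]) (use D in auto)
  thus ?thesis unfolding \<phi>_def v_def by simp
qed

lemma mono_tangent:
  fixes h :: "'a::real_inner \<Rightarrow> real"
  assumes d: "\<And>z. (h has_derivative (\<lambda>u. D z \<bullet> u)) (at z)"
    and m: "\<And>z w. (D z - D w) \<bullet> (z - w) \<ge> 0"
  shows "h y \<ge> h x + D x \<bullet> (y - x)"
proof -
  define v where "v = y - x"
  define \<phi> where "\<phi> t = h (x + t *\<^sub>R v)" for t :: real
  have Dphi: "(\<phi> has_field_derivative (D (x + t *\<^sub>R v) \<bullet> v)) (at t)" for t
  proof -
    have "((\<lambda>t::real. x + t *\<^sub>R v) has_derivative (\<lambda>t. t *\<^sub>R v)) (at t)"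
      by (auto intro!: derivative_eq_intros)
    from has_derivative_compose[OF this d]
    have "(\<phi> has_derivative (\<lambda>s. D (x + t *\<^sub>R v) \<bullet> (s *\<^sub>R v))) (at t)"
      unfolding \<phi>_def by simp
    moreover have "(\<lambda>s. D (x + t *\<^sub>R v) \<bullet> (s *\<^sub>R v)) = (*) (D (x + t *\<^sub>R v) \<bullet> v)"
      by auto
    ultimately show ?thesis by (simp add: has_field_derivative_def)
  qed
  have cont: "continuous_on {0..1} \<phi>"
    using Dphi by (meson DERIV_continuous continuous_at_imp_continuous_on)
  obtain l z where z: "0 < z" "z < 1" "(\<phi> has_field_derivative l) (at z)" "\<phi> 1 - \<phi> 0 = (1 - 0) * l"
    using MVT[of 0 1 \<phi>] cont Dphi real_differentiable_def by fastforce
  have l: "l = D (x + z *\<^sub>R v) \<bullet> v" using DERIV_unique[OF z(3) Dphi] .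
  have "0 \<le> (D (x + z *\<^sub>R v) - D x) \<bullet> ((x + z *\<^sub>R v) - x)" by (rule m)
  hence "0 \<le> z * ((D (x + z *\<^sub>R v) - D x) \<bullet> v)" by simp
  hence "0 \<le> (D (x + z *\<^sub>R v) - D x) \<bullet> v" using z(1) by (simp add: zero_le_mult_iff)
  hence "l \<ge> D x \<bullet> v" using l by (simp add: inner_diff_left)
  thus ?thesis using z(4) unfolding \<phi>_def v_def by simp
qed

theorem lemma4p11:
  fixes H :: "'a::euclidean_space \<Rightarrow> 'a \<Rightarrow> real"
    and F G :: "'a \<Rightarrow> 'a \<Rightarrow> 'a"
    and \<alpha>H :: real
  assumes deriv: "\<And>x p. ((\<lambda>z. H (fst z) (snd z)) has_derivative
                      (\<lambda>(u, v). - (G x p \<bullet> u) + F x p \<bullet> v)) (at (x, p))"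
    and contF: "continuous_on UNIV (\<lambda>z. F (fst z) (snd z))"
    and contG: "continuous_on UNIV (\<lambda>z. G (fst z) (snd z))"
    and \<alpha>pos: "\<alpha>H > 0"
    and sconv: "\<And>x. convex_on UNIV (\<lambda>p. H x p - \<alpha>H / 2 * (norm p)\<^sup>2)"
    and mono: "\<And>x y p q. (F x p - F y q) \<bullet> (p - q) + (G x p - G y q) \<bullet> (x - y) \<ge> 0"
  shows "(F x p - F y q) \<bullet> (p - q) + (G x p - G y q) \<bullet> (x - y) \<ge> \<alpha>H * (norm (p - q))\<^sup>2"
proof -
  have dp: "((\<lambda>p. H x p) has_derivative (\<lambda>v. F x p \<bullet> v)) (at p)" for x p
  proof -
    have "((\<lambda>v. (x, v)) has_derivative (\<lambda>v. (0, v))) (at p)"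
      by (auto intro!: derivative_eq_intros)
    from has_derivative_compose[OF this deriv[of x p]] show ?thesis by simp
  qed
  have dx: "((\<lambda>x. - H x p) has_derivative (\<lambda>u. G x p \<bullet> u)) (at x)" for x p
  proof -
    have "((\<lambda>u. (u, p)) has_derivative (\<lambda>u. (u, 0))) (at x)"
      by (auto intro!: derivative_eq_intros)
    from has_derivative_compose[OF this deriv[of x p]] 
    have "((\<lambda>x. H x p) has_derivative (\<lambda>u. - (G x p \<bullet> u))) (at x)" by simp
    from has_derivative_minus[OF this] show ?thesis by simp
  qed
  have dg: "((\<lambda>p. H x p - \<alpha>H / 2 * (norm p)\<^sup>2) has_derivative
             (\<lambda>v. F x p \<bullet> v - \<alpha>H * (p \<bullet> v))) (at p)" for x p
  proof -
    have "((\<lambda>p. H x p - \<alpha>H / 2 * (p \<bullet> p)) has_derivative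
             (\<lambda>v. F x p \<bullet> v - \<alpha>H / 2 * (p \<bullet> v + v \<bullet> p))) (at p)"
      by (intro derivative_intros dp has_derivative_inner has_derivative_ident)
    moreover have "(\<lambda>v. F x p \<bullet> v - \<alpha>H / 2 * (p \<bullet> v + v \<bullet> p)) = (\<lambda>v. F x p \<bullet> v - \<alpha>H * (p \<bullet> v))"
      by (auto simp: inner_commute)
    ultimately show ?thesis by (simp add: power2_norm_eq_inner)
  qed
  have c1: "H x q - \<alpha>H / 2 * (norm q)\<^sup>2 \<ge> H x p - \<alpha>H / 2 * (norm p)\<^sup>2 + (F x p \<bullet> (q - p) - \<alpha>H * (p \<bullet> (q - p)))"
    using conv_tangent[OF sconv dg] .
  have c2: "H y p - \<alpha>H / 2 * (norm p)\<^sup>2 \<ge> H y q - \<alpha>H / 2 * (norm q)\<^sup>2 + (F y q \<bullet> (p - q) - \<alpha>H * (q \<bullet> (p - q)))"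
    using conv_tangent[OF sconv dg] .
  have mG: "(G z r - G w r) \<bullet> (z - w) \<ge> 0" for z w r
    using mono[of z r w r] by simp
  have k1: "- H y p \<ge> - H x p + G x p \<bullet> (y - x)"
    by (rule mono_tangent[OF dx mG])
  have k2: "- H x q \<ge> - H y q + G y q \<bullet> (x - y)"
    by (rule mono_tangent[OF dx mG])
  have sq: "(norm (p - q))\<^sup>2 = (p - q) \<bullet> (p - q)" by (simp add: power2_norm_eq_inner)
  show ?thesis using c1 c2 k1 k2 unfolding sq
    by (simp add: inner_diff_left inner_diff_right inner_commute algebra_simps)
qed

end
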